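(* Let $A\in\mathbb{R}^{n\times n}$ with $\rho(A)<1$, $C\in\mathbb{R}^{m\times n}$, and $Q\in\mathbb{R}^{n\times n}$, $R\in\mathbb{R}^{m\times m}$ symmetric positive definite, with $(A,C)$ observable and $(A,Q^{1/2})$ controllable. Let $\bar P$ be the unique stabilizing positive definite solution of $$\bar P = A\bar PA^{\intercal}+Q-(A\bar PA^{\intercal}+Q)C^{\intercal}\big(C(A\bar PA^{\intercal}+Q)C^{\intercal}+R\big)^{-1}C(A\bar PA^{\intercal}+Q),$$ let $P^{OP}=L(A,Q)$ and $P_n=P^{OP}+\bar P$. Fix $\gamma^e$ with $0<\gamma^e<1$ and, for $\mu\in(0,1)$, define $$J^e(\mu)=(1-\gamma^e)(1-\mu)\operatorname{tr}W^e+\gamma^e\operatorname{tr}S^e+(1-\gamma^e)\mu\operatorname{tr}H^e,$$ where $W^e=L(\sqrt{\gamma^e}A,\bar P)$, $S^e=L(\sqrt{\gamma^e}A,Q)$, $H^e=L(\sqrt{\gamma^e}A,P_n)$. Then for all $0<\mu^\star<\mu<1$ we have $J^e(\mu^\star)<J^e(\mu)$, i.e. $J^e$ is strictly increasing on $(0,1)$.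
   Context: For a square matrix $T$ with $\rho(T)<1$ and a symmetric matrix $U$, $L(T,U)$ denotes the unique solution $V$ of $V=TVT^{\intercal}+U$, equivalently $L(T,U)=\sum_{j=0}^{\infty}T^jU(T^{\intercal})^j$. $J^e(\mu)$ is the trace of the steady-state expected estimation error covariance of an eavesdropper when the sensor transmits noise with probability $\mu$ and the eavesdropper's packet dropout probability is $\gamma^e$. *)

theory Defs
  imports "HOL-Analysis.Analysis"
begin

primrec mpow :: "real^'n^'n \<Rightarrow> nat \<Rightarrow> real^'n^'n" where
  "mpow A 0 = mat 1"
| "mpow A (Suc k) = A ** mpow A k"

definition cplx :: "real^'n^'m \<Rightarrow> complex^'n^'m" where
  "cplx A = (\<chi> i j. complex_of_real (A $ i $ j))"

definition spectral_radius :: "real^'n^'n \<Rightarrow> real" where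
  "spectral_radius A =
     Sup {cmod l | l. \<exists>v. v \<noteq> 0 \<and> cplx A *v v = l *s v}"

definition pos_def :: "real^'n^'n \<Rightarrow> bool" where
  "pos_def M \<longleftrightarrow> transpose M = M \<and> (\<forall>x. x \<noteq> 0 \<longrightarrow> x \<bullet> (M *v x) > 0)"

definition pos_semidef :: "real^'n^'n \<Rightarrow> bool" where
  "pos_semidef M \<longleftrightarrow> transpose M = M \<and> (\<forall>x. x \<bullet> (M *v x) \<ge> 0)"

definition msqrt :: "real^'n^'n \<Rightarrow> real^'n^'n" where
  "msqrt Q = (THE B. pos_semidef B \<and> B ** B = Q)"

(* (A,C) observable: the observability matrix [C; CA; ...; CA^(n-1)] has rank n,
   written as: its kernel is trivial *)
definition observable :: "real^'n^'n \<Rightarrow> real^'n^'m \<Rightarrow> bool" where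
  "observable A C \<longleftrightarrow>
     (\<forall>x. (\<forall>k<CARD('n). (C ** mpow A k) *v x = 0) \<longrightarrow> x = 0)"

(* (A,B) controllable: the controllability matrix [B, AB, ..., A^(n-1)B] has rank n,
   written as: its left kernel is trivial *)
definition controllable :: "real^'n^'n \<Rightarrow> real^'k^'n \<Rightarrow> bool" where
  "controllable A B \<longleftrightarrow>
     (\<forall>x. (\<forall>k<CARD('n). x v* (mpow A k ** B) = 0) \<longrightarrow> x = 0)"

definition lyap :: "real^'n^'n \<Rightarrow> real^'n^'n \<Rightarrow> real^'n^'n" where
  "lyap T U = (\<Sum>j. mpow T j ** U ** transpose (mpow T j))"

definition prior :: "real^'n^'n \<Rightarrow> real^'n^'n \<Rightarrow> real^'n^'n \<Rightarrow> real^'n^'n" where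
  "prior A Q P = A ** P ** transpose A + Q"

definition gain :: "real^'n^'n \<Rightarrow> real^'n^'m \<Rightarrow> real^'n^'n \<Rightarrow> real^'m^'m \<Rightarrow> real^'n^'n \<Rightarrow> real^'m^'n" where
  "gain A C Q R P = prior A Q P ** transpose C ** matrix_inv (C ** prior A Q P ** transpose C + R)"

definition riccati_sol :: "real^'n^'n \<Rightarrow> real^'n^'m \<Rightarrow> real^'n^'n \<Rightarrow> real^'m^'m \<Rightarrow> real^'n^'n \<Rightarrow> bool" where
  "riccati_sol A C Q R P \<longleftrightarrow>
     P = prior A Q P - prior A Q P ** transpose C **
           matrix_inv (C ** prior A Q P ** transpose C + R) ** C ** prior A Q P"

definition stabilizing :: "real^'n^'n \<Rightarrow> real^'n^'m \<Rightarrow> real^'n^'n \<Rightarrow> real^'m^'m \<Rightarrow> real^'n^'n \<Rightarrow> bool" where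
  "stabilizing A C Q R P \<longleftrightarrow>
     spectral_radius (A ** (mat 1 - gain A C Q R P ** C)) < 1"

definition Je :: "real^'n^'n \<Rightarrow> real^'n^'n \<Rightarrow> real^'n^'n \<Rightarrow> real \<Rightarrow> real \<Rightarrow> real" where
  "Je A Q Pbar ge mu =
     (let We = lyap (sqrt ge *\<^sub>R A) Pbar;
          Se = lyap (sqrt ge *\<^sub>R A) Q;
          Pn = lyap A Q + Pbar;
          He = lyap (sqrt ge *\<^sub>R A) Pn
      in (1 - ge) * (1 - mu) * trace We + ge * trace Se + (1 - ge) * mu * trace He)"

end

theory Submission imports Defs "Jordan_Normal_Form.Spectral_Radius" begin
no_notation Matrix.vec_index (infixl "$" 100)
no_notation Matrix.scalar_prod (infix "\<bullet>" 70)
hide_const (open) Spectral_Radius.spectral_radius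

definition decays :: "real^'n^'n \<Rightarrow> bool" where
  "decays T \<longleftrightarrow> (\<exists>c r. 0 \<le> r \<and> r < 1 \<and> (\<forall>k i j. \<bar>mpow T k $ i $ j\<bar> \<le> c * r ^ k))"

definition idx :: "'n::finite \<Rightarrow> nat" where "idx = to_nat_on (UNIV::'n set)"
definition unidx :: "nat \<Rightarrow> 'n::finite" where "unidx = inv_into (UNIV::'n set) idx"

lemma idx_bij: "bij_betw (idx::'n::finite\<Rightarrow>nat) UNIV {..<CARD('n)}"
  unfolding idx_def by (rule to_nat_on_finite) simp

lemma idx_lt: "idx (x::'n::finite) < CARD('n)"
  using bij_betw_apply[OF idx_bij] by auto

lemma unidx_idx: "unidx (idx x) = x"
  unfolding unidx_def using idx_bij bij_betw_inv_into_left by fastforce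

lemma idx_unidx: "i < CARD('n::finite) \<Longrightarrow> idx (unidx i :: 'n) = i"
  unfolding unidx_def using idx_bij bij_betw_inv_into_right by fastforce

lemma sum_idx: "(\<Sum>x\<in>UNIV. h x) = (\<Sum>i<CARD('n::finite). h (unidx i :: 'n))"
proof -
  have "bij_betw (unidx :: nat \<Rightarrow> 'n) {..<CARD('n)} UNIV"
    unfolding unidx_def by (rule bij_betw_inv_into[OF idx_bij])
  then show ?thesis by (rule sum.reindex_bij_betw[symmetric])
qed

definition toM :: "complex^'n^'n \<Rightarrow> complex Matrix.mat" where
  "toM M = Matrix.mat CARD('n) CARD('n) (\<lambda>(i,j). M $ unidx i $ unidx j)"

definition toV :: "complex^'n \<Rightarrow> complex Matrix.vec" where
  "toV w = Matrix.vec CARD('n) (\<lambda>i. w $ unidx i)"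

lemma toM_carrier: "toM (M::complex^'n^'n) \<in> carrier_mat CARD('n) CARD('n)"
  by (simp add: toM_def)

lemma toM_dims[simp]: "dim_row (toM (M::complex^'n^'n)) = CARD('n)" "dim_col (toM M) = CARD('n)"
  by (simp_all add: toM_def)

lemma toM_index: "i < CARD('n) \<Longrightarrow> j < CARD('n) \<Longrightarrow> toM (M::complex^'n^'n) $$ (i,j) = M $ unidx i $ unidx j"
  by (simp add: toM_def)

lemma toM_mult: "toM ((M::complex^'n^'n) ** N) = toM M * toM N"
proof (rule eq_matI)
  fix i j assume i: "i < dim_row (toM M * toM N)" and j: "j < dim_col (toM M * toM N)"
  then have i': "i < CARD('n)" and j': "j < CARD('n)" by simp_all
  have "(toM M * toM N) $$ (i,j) = (\<Sum>k\<in>{0..<CARD('n)}. toM M $$ (i,k) * toM N $$ (k,j))"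
    using i' j' by (simp add: scalar_prod_def)
  also have "\<dots> = (\<Sum>k<CARD('n). M $ unidx i $ unidx k * N $ unidx k $ unidx j)"
    using i' j' by (simp add: toM_index atLeast0LessThan)
  also have "\<dots> = (M ** N) $ unidx i $ unidx j"
    by (simp add: matrix_matrix_mult_def sum_idx[of "\<lambda>k. M $ unidx i $ k * N $ k $ unidx j"])
  finally show "toM (M ** N) $$ (i,j) = (toM M * toM N) $$ (i,j)"
    using i' j' by (simp add: toM_index)
qed auto

lemma toM_mult_vec: "toM (M::complex^'n^'n) *\<^sub>v toV w = toV (M *v w)"
proof (rule eq_vecI)
  fix i assume "i < dim_vec (toV (M *v w))"
  then have i': "i < CARD('n)" by (simp add: toV_def)
  have "vec_index (toM M *\<^sub>v toV w) i = (\<Sum>k\<in>{0..<CARD('n)}. toM M $$ (i,k) * vec_index (toV w) k)"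
    using i' by (simp add: scalar_prod_def toV_def)
  also have "\<dots> = (\<Sum>k<CARD('n). M $ unidx i $ unidx k * w $ unidx k)"
    using i' by (simp add: toM_index toV_def atLeast0LessThan)
  also have "\<dots> = (M *v w) $ unidx i"
    by (simp add: matrix_vector_mult_def sum_idx[of "\<lambda>k. M $ unidx i $ k * w $ k"])
  finally show "vec_index (toM M *\<^sub>v toV w) i = vec_index (toV (M *v w)) i"
    using i' by (simp add: toV_def)
qed (simp add: toV_def)

lemma toV_inj: "toV (a::complex^'n) = toV b \<Longrightarrow> a = b"
proof -
  assume h: "toV a = toV b"
  show "a = b"
    unfolding Finite_Cartesian_Product.vec_eq_iff
  proof
    fix x :: 'n
    have "vec_index (toV a) (idx x) = vec_index (toV b) (idx x)" using h by simp
    then show "a $ x = b $ x" by (simp add: toV_def idx_lt unidx_idx)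
  qed
qed

lemma toV_zero: "toV (0::complex^'n) = 0\<^sub>v CARD('n)"
  by (rule eq_vecI) (simp_all add: toV_def)

lemma toV_smult: "toV (l *s (w::complex^'n)) = l \<cdot>\<^sub>v toV w"
  by (rule eq_vecI) (simp_all add: toV_def)

lemma toV_carrier: "toV (w::complex^'n) \<in> carrier_vec CARD('n)"
  by (simp add: toV_def)

lemma toV_fromV: "v \<in> carrier_vec CARD('n::finite) \<Longrightarrow> toV (\<chi> x::'n. vec_index v (idx x)) = v"
  by (rule eq_vecI) (simp_all add: toV_def idx_unidx)

lemma eig_to_jnf:
  assumes "v \<noteq> 0" "(M::complex^'n^'n) *v v = l *s v"
  shows "eigenvalue (toM M) l"
  unfolding eigenvalue_def eigenvector_def
proof (intro exI conjI)
  show "toV v \<in> carrier_vec (dim_row (toM M))" by (simp add: toV_carrier)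
  show "toV v \<noteq> 0\<^sub>v (dim_row (toM M))"
  proof
    assume "toV v = 0\<^sub>v (dim_row (toM M))"
    then have "toV v = toV (0::complex^'n)" by (simp add: toV_zero)
    then have "v = 0" by (rule toV_inj)
    with assms(1) show False by simp
  qed
  show "toM M *\<^sub>v toV v = l \<cdot>\<^sub>v toV v" by (simp add: toM_mult_vec assms(2) toV_smult)
qed

lemma jnf_to_eig:
  assumes "eigenvalue (toM (M::complex^'n^'n)) l"
  shows "\<exists>v. v \<noteq> 0 \<and> M *v v = l *s v"
proof -
  obtain u where u: "u \<in> carrier_vec CARD('n)" "u \<noteq> 0\<^sub>v CARD('n)" "toM M *\<^sub>v u = l \<cdot>\<^sub>v u"
    using assms unfolding eigenvalue_def eigenvector_def by auto
  define v where "v = (\<chi> x::'n. vec_index u (idx x))"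
  have tv: "toV v = u" unfolding v_def by (rule toV_fromV[OF u(1)])
  have "v \<noteq> 0" using u(2) tv toV_zero by auto
  moreover have "toV (M *v v) = toV (l *s v)"
    using u(3) tv by (simp add: toM_mult_vec[symmetric] toV_smult)
  ultimately show ?thesis using toV_inj by blast
qed

lemma cplx_mult: "cplx ((A::real^'n^'m) ** (B::real^'k^'n)) = cplx A ** cplx B"
  by (simp add: cplx_def matrix_matrix_mult_def vec_eq_iff)

lemma cplx_one: "cplx (Finite_Cartesian_Product.mat 1 :: real^'n^'n) = Finite_Cartesian_Product.mat 1"
  by (auto simp: cplx_def Finite_Cartesian_Product.mat_def Finite_Cartesian_Product.vec_eq_iff)

lemma toM_one: "toM (Finite_Cartesian_Product.mat 1 :: complex^'n^'n) = 1\<^sub>m CARD('n)"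
proof (rule eq_matI)
  fix i j assume "i < dim_row (1\<^sub>m CARD('n))" "j < dim_col (1\<^sub>m CARD('n))"
  then have i: "i < CARD('n)" and j: "j < CARD('n)" by simp_all
  have ii: "idx (unidx i :: 'n) = i" using i by (rule idx_unidx)
  have jj: "idx (unidx j :: 'n) = j" using j by (rule idx_unidx)
  have "(unidx i :: 'n) = unidx j \<longleftrightarrow> i = j"
    using ii jj by metis
  then show "toM (Finite_Cartesian_Product.mat 1 :: complex^'n^'n) $$ (i, j) = 1\<^sub>m CARD('n) $$ (i, j)"
    using i j by (simp add: toM_index Finite_Cartesian_Product.mat_def)
qed auto

lemma mpow_Suc': "mpow A (Suc k) = mpow A k ** A"
  by (induction k) (simp_all add: matrix_mul_assoc)

lemma toM_pow: "toM (cplx (mpow (A::real^'n^'n) k)) = toM (cplx A) ^\<^sub>m k"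
proof (induction k)
  case 0
  then show ?case by (simp add: cplx_one toM_one)
next
  case (Suc k)
  show ?case
    unfolding mpow_Suc' cplx_mult toM_mult Suc by simp
qed

lemma mpow_scaleR: "mpow (s *\<^sub>R A) k = s ^ k *\<^sub>R mpow A k"
  by (induction k) (simp_all add: scalar_matrix_assoc matrix_scalar_ac mult.commute)

lemma cplx_scaleR: "cplx (c *\<^sub>R A) = c *\<^sub>R cplx A"
  by (auto simp: cplx_def Finite_Cartesian_Product.vec_eq_iff complex_eq_iff)

lemma scaleR_mvec: "((c::real) *\<^sub>R (M::complex^'n^'m)) *v w = c *\<^sub>R (M *v w)"
  by (simp add: matrix_vector_mult_def Finite_Cartesian_Product.vec_eq_iff scaleR_sum_right)

lemma decays_of_sr:
  fixes A :: "real^'n^'n"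
  assumes "spectral_radius A < 1"
  shows "decays A"
proof -
  define S where "S = {cmod l | l. \<exists>v. v \<noteq> 0 \<and> cplx A *v v = l *s v}"
  have sr: "spectral_radius A = Sup S" unfolding Defs.spectral_radius_def S_def ..
  have "S \<subseteq> norm ` Spectral_Radius.spectrum (toM (cplx A))"
    unfolding S_def Spectral_Radius.spectrum_def using eig_to_jnf by blast
  then have fin: "finite S"
    using card_finite_spectrum(1)[OF toM_carrier] finite_subset by blast
  then have bdd: "bdd_above S" by (rule bdd_above_finite)
  have le: "cmod l \<le> spectral_radius A" if "v \<noteq> 0" "cplx A *v v = l *s v" for v l
    unfolding sr by (rule cSup_upper[OF _ bdd]) (use that in \<open>auto simp: S_def\<close>)
  define \<rho> where "\<rho> = spectral_radius A"
  define r where "r = (max \<rho> 0 + 1) / 2"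
  have r0: "0 < r" "r < 1" "\<rho> < r" using assms by (auto simp: r_def \<rho>_def max_def)
  define A' where "A' = (1/r) *\<^sub>R A"
  have ev_lt: "cmod ev < 1" if evh: "eigenvalue (toM (cplx A')) ev" for ev
  proof -
    obtain w where w: "w \<noteq> 0" "cplx A' *v w = ev *s w" using jnf_to_eig[OF evh] by blast
    have cA: "cplx A = r *\<^sub>R cplx A'" using r0 by (simp add: A'_def cplx_scaleR)
    have "cplx A *v w = (of_real r * ev) *s w"
      unfolding cA scaleR_mvec w(2)
      apply (simp add: Finite_Cartesian_Product.vec_eq_iff)
      apply (simp add: scaleR_conv_of_real)
      done
    then have "cmod (of_real r * ev) \<le> \<rho>" using le w(1) \<rho>_def by blast
    then have h: "r * cmod ev \<le> \<rho>" using r0 by (simp add: norm_mult)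
    show ?thesis
    proof (rule ccontr)
      assume "\<not> cmod ev < 1"
      then have "r * 1 \<le> r * cmod ev" using r0 by (intro mult_left_mono) auto
      with h r0 show False by simp
    qed
  qed
  have jsr: "Spectral_Radius.spectral_radius (toM (cplx A')) < 1"
  proof -
    have "Spectral_Radius.spectral_radius (toM (cplx A')) \<in> norm ` Spectral_Radius.spectrum (toM (cplx A'))"
      by (rule spectral_radius_mem_max(1)[OF toM_carrier]) simp
    then show ?thesis using ev_lt unfolding Spectral_Radius.spectrum_def by auto
  qed
  obtain c where c: "\<And>k. norm_bound (toM (cplx A') ^\<^sub>m k) c"
    using spectral_radius_jnf_norm_bound_less_1_upper_triangular[OF toM_carrier jsr] by blast
  have bnd: "\<bar>mpow A k $ i $ j\<bar> \<le> c * r^k" for k i j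
  proof -
    have "norm (toM (cplx (mpow A' k)) $$ (idx i, idx j)) \<le> c"
      using c[of k] idx_lt[of i] idx_lt[of j] unfolding toM_pow norm_bound_def by (auto split: if_splits)
    then have c1: "\<bar>mpow A' k $ i $ j\<bar> \<le> c" by (simp add: toM_index idx_lt unidx_idx cplx_def)
    have "mpow A k = (r^k * (1/r)^k) *\<^sub>R mpow A k"
      using r0 by (simp add: power_mult_distrib[symmetric])
    also have "\<dots> = r^k *\<^sub>R mpow A' k" by (simp add: A'_def mpow_scaleR)
    finally have "mpow A k $ i $ j = r^k * mpow A' k $ i $ j" by simp
    then have "\<bar>mpow A k $ i $ j\<bar> = r^k * \<bar>mpow A' k $ i $ j\<bar>"
      using r0 by (simp add: abs_mult)
    also have "\<dots> \<le> r^k * c" using c1 r0 by (intro mult_left_mono) auto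
    finally show ?thesis by (simp add: mult.commute)
  qed
  show ?thesis unfolding decays_def using r0 bnd by (intro exI[of _ c] exI[of _ r]) auto
qed

definition Fterm :: "real^'n^'n \<Rightarrow> real^'n^'n \<Rightarrow> nat \<Rightarrow> real^'n^'n" where
  "Fterm T U k = mpow T k ** U ** transpose (mpow T k)"

lemma lyap_Fterm: "lyap T U = (\<Sum>k. Fterm T U k)"
  unfolding lyap_def Fterm_def ..

lemma mat_norm_le: "norm (M::real^'n^'m) \<le> (\<Sum>i\<in>UNIV. \<Sum>j\<in>UNIV. \<bar>M$i$j\<bar>)"
proof -
  have "norm M \<le> (\<Sum>i\<in>UNIV. norm (M$i))"
    unfolding norm_vec_def by (rule L2_set_le_sum) auto
  also have "\<dots> \<le> (\<Sum>i\<in>UNIV. \<Sum>j\<in>UNIV. \<bar>M$i$j\<bar>)"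
    by (rule sum_mono) (rule norm_le_l1_cart)
  finally show ?thesis .
qed

lemma Fterm_entry_bound:
  fixes M U :: "real^'n^'n"
  assumes "\<And>i j. \<bar>M $ i $ j\<bar> \<le> b"
  shows "\<bar>(M ** U ** transpose M) $ i $ j\<bar> \<le> b * b * (\<Sum>a\<in>UNIV. \<Sum>l\<in>UNIV. \<bar>U$a$l\<bar>)"
proof -
  have "(M ** U ** transpose M) $ i $ j = (\<Sum>l\<in>UNIV. (\<Sum>a\<in>UNIV. M$i$a * U$a$l) * M$j$l)"
    by (simp add: matrix_matrix_mult_def transpose_def)
  also have "\<dots> = (\<Sum>l\<in>UNIV. \<Sum>a\<in>UNIV. M$i$a * U$a$l * M$j$l)"
    by (simp add: sum_distrib_right)
  finally have eq: "(M ** U ** transpose M) $ i $ j = (\<Sum>l\<in>UNIV. \<Sum>a\<in>UNIV. M$i$a * U$a$l * M$j$l)" .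
  have "\<bar>(M ** U ** transpose M) $ i $ j\<bar> \<le> (\<Sum>l\<in>UNIV. \<Sum>a\<in>UNIV. \<bar>M$i$a * U$a$l * M$j$l\<bar>)"
    unfolding eq by (rule order_trans[OF sum_abs]) (intro sum_mono sum_abs)
  also have "\<dots> \<le> (\<Sum>l\<in>UNIV. \<Sum>a\<in>UNIV. b * b * \<bar>U$a$l\<bar>)"
  proof (intro sum_mono)
    fix l a
    have "\<bar>M$i$a * U$a$l * M$j$l\<bar> = \<bar>M$i$a\<bar> * \<bar>M$j$l\<bar> * \<bar>U$a$l\<bar>" by (simp add: abs_mult)
    also have "\<dots> \<le> b * b * \<bar>U$a$l\<bar>"
      by (intro mult_right_mono mult_mono assms) (auto intro: order_trans[OF abs_ge_zero assms])
    finally show "\<bar>M$i$a * U$a$l * M$j$l\<bar> \<le> b * b * \<bar>U$a$l\<bar>" .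
  qed
  also have "\<dots> = b * b * (\<Sum>a\<in>UNIV. \<Sum>l\<in>UNIV. \<bar>U$a$l\<bar>)"
    by (subst sum.swap) (simp add: sum_distrib_left)
  finally show ?thesis .
qed

lemma summable_Fterm:
  fixes T :: "real^'n^'n"
  assumes "decays T"
  shows "summable (Fterm T U)"
proof -
  obtain c r where r: "0 \<le> r" "r < 1" and b: "\<And>k i j. \<bar>mpow T k $ i $ j\<bar> \<le> c * r ^ k"
    using assms unfolding decays_def by blast
  define K where "K = (\<Sum>a\<in>UNIV. \<Sum>l\<in>UNIV. \<bar>U$a$l\<bar>)"
  have "norm (Fterm T U k) \<le> of_nat (CARD('n) * CARD('n)) * (c * c * K) * (r*r) ^ k" for k
  proof -
    have "norm (Fterm T U k) \<le> (\<Sum>i\<in>UNIV. \<Sum>j\<in>UNIV. \<bar>Fterm T U k$i$j\<bar>)" by (rule mat_norm_le)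
    also have "\<dots> \<le> (\<Sum>i\<in>(UNIV::'n set). \<Sum>j\<in>(UNIV::'n set). (c * r^k) * (c * r^k) * K)"
    proof (intro sum_mono)
      fix i j
      show "\<bar>Fterm T U k$i$j\<bar> \<le> (c * r^k) * (c * r^k) * K"
        unfolding Fterm_def K_def by (rule Fterm_entry_bound) (rule b)
    qed
    also have "\<dots> = of_nat (CARD('n) * CARD('n)) * (c * c * K) * (r*r) ^ k"
      by (simp add: power_mult_distrib)
    finally show ?thesis .
  qed
  note nb = this
  have sg: "summable (\<lambda>k. of_nat (CARD('n) * CARD('n)) * (c * c * K) * (r*r) ^ k)"
  proof -
    have "r * r \<le> 1 * r" using r by (intro mult_right_mono) auto
    then have "norm (r * r) < 1" using r by simp
    then show ?thesis by (intro summable_mult summable_geometric)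
  qed
  show ?thesis
    by (rule summable_comparison_test'[OF sg nb])
qed


lemma decays_scaleR:
  assumes "decays A" "0 \<le> s" "s \<le> 1"
  shows "decays (s *\<^sub>R A)"
proof -
  obtain c r where r: "0 \<le> r" "r < 1" and b: "\<And>k i j. \<bar>mpow A k $ i $ j\<bar> \<le> c * r ^ k"
    using assms unfolding decays_def by blast
  have "\<bar>mpow (s *\<^sub>R A) k $ i $ j\<bar> \<le> c * r ^ k" for k i j
  proof -
    have "\<bar>mpow (s *\<^sub>R A) k $ i $ j\<bar> = s^k * \<bar>mpow A k $ i $ j\<bar>"
      using assms by (simp add: mpow_scaleR abs_mult)
    also have "\<dots> \<le> 1 * \<bar>mpow A k $ i $ j\<bar>"
      using assms by (intro mult_right_mono power_le_one) auto
    finally show ?thesis using b[of k i j] by simp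
  qed
  with r show ?thesis unfolding decays_def by blast
qed

lemma matrix_add_rdistrib: "((A::real^'n^'m) + B) ** (C::real^'k^'n) = A ** C + B ** C"
  by (simp add: matrix_matrix_mult_def Finite_Cartesian_Product.vec_eq_iff sum.distrib distrib_right)

lemma lyap_add:
  assumes "decays T"
  shows "lyap T (U + V) = lyap T U + lyap T V"
proof -
  have "Fterm T (U + V) = (\<lambda>k. Fterm T U k + Fterm T V k)"
    by (rule ext) (simp add: Fterm_def matrix_add_ldistrib matrix_add_rdistrib)
  then show ?thesis unfolding lyap_Fterm
    using suminf_add[OF summable_Fterm[OF assms] summable_Fterm[OF assms]] by simp
qed

lemma trace_scaleR: "trace (c *\<^sub>R (M::real^'n^'n)) = c * trace M"
  by (simp add: trace_def sum_distrib_left)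

lemma linear_phi: "linear (\<lambda>X::real^'n^'n. trace ((N::real^'n^'n) ** X ** transpose N))"
  by (rule linearI) (simp_all add: matrix_add_ldistrib matrix_add_rdistrib trace_add
        matrix_scalar_ac scalar_matrix_assoc[symmetric] trace_scaleR)

lemma phi_lyap:
  assumes "decays T"
  shows "trace ((N::real^'n^'n) ** lyap T U ** transpose N) = (\<Sum>k. trace (N ** Fterm T U k ** transpose N))"
proof -
  have bl: "bounded_linear (\<lambda>X::real^'n^'n. trace (N ** X ** transpose (N::real^'n^'n)))"
    using linear_phi linear_conv_bounded_linear by blast
  show ?thesis unfolding lyap_Fterm
    using bounded_linear.suminf[OF bl summable_Fterm[OF assms]] by simp
qed

lemma trace_lyap:
  assumes "decays T"
  shows "trace (lyap T U) = (\<Sum>k. trace (Fterm T U k))"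
  using phi_lyap[OF assms, of "Finite_Cartesian_Product.mat 1"] by simp

lemma summable_phi:
  assumes "decays T"
  shows "summable (\<lambda>k. trace ((N::real^'n^'n) ** Fterm T U k ** transpose N))"
proof -
  have bl: "bounded_linear (\<lambda>X::real^'n^'n. trace (N ** X ** transpose (N::real^'n^'n)))"
    using linear_phi linear_conv_bounded_linear by blast
  show ?thesis
    using bounded_linear.summable[OF bl summable_Fterm[OF assms]] by simp
qed

lemma diag_entry:
  fixes N X :: "real^'n^'n"
  shows "(N ** X ** transpose N) $ i $ i = (N$i) \<bullet> (X *v (N$i))"
proof -
  have "(N ** X ** transpose N) $ i $ i = (\<Sum>k\<in>UNIV. \<Sum>l\<in>UNIV. N$i$l * X$l$k * N$i$k)"
    by (simp add: matrix_matrix_mult_def transpose_def sum_distrib_right)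
  also have "\<dots> = (\<Sum>l\<in>UNIV. \<Sum>k\<in>UNIV. N$i$l * X$l$k * N$i$k)"
    by (rule sum.swap)
  also have "\<dots> = (N$i) \<bullet> (X *v (N$i))"
    by (simp add: inner_vec_def matrix_vector_mult_def sum_distrib_left mult.commute mult.left_commute)
  finally show ?thesis .
qed

lemma trace_psd:
  fixes N X :: "real^'n^'n"
  assumes "\<And>x. 0 \<le> x \<bullet> (X *v x)"
  shows "0 \<le> trace (N ** X ** transpose N)"
  unfolding trace_def diag_entry by (intro sum_nonneg assms)

lemma trace_pd:
  fixes Q :: "real^'n^'n"
  assumes "pos_def Q"
  shows "0 < trace Q"
proof -
  have "Q $ i $ i > 0" for i
  proof -
    have "axis i 1 \<bullet> (Q *v axis i 1) > 0"
      using assms unfolding pos_def_def by (auto simp: axis_eq_0_iff)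
    moreover have "axis i 1 \<bullet> (Q *v axis i 1) = Q $ i $ i"
      apply (simp add: inner_vec_def matrix_vector_mult_def axis_def)
      apply (simp add: if_distrib[of "\<lambda>y. y * z" for z] if_distrib[of "\<lambda>y. z * y" for z] cong: if_cong)
      done
    ultimately show ?thesis by simp
  qed
  then show ?thesis unfolding trace_def by (intro sum_pos) auto
qed

lemma trace_lyap_ge:
  assumes "decays T" and "\<And>N::real^'n^'n. 0 \<le> trace (N ** X ** transpose N)"
  shows "trace X \<le> trace (lyap T X)"
proof -
  have "(\<Sum>k\<in>{0}. trace (Fterm T X k)) \<le> (\<Sum>k. trace (Fterm T X k))"
    using summable_phi[OF assms(1), of "Finite_Cartesian_Product.mat 1" X] assms(2)
    by (intro sum_le_suminf) (auto simp: Fterm_def intro: assms(2))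
  then show ?thesis unfolding trace_lyap[OF assms(1)]
    by (simp add: Fterm_def)
qed

lemma phi_lyap_nonneg:
  assumes "decays T" and "\<And>x. 0 \<le> x \<bullet> (Q *v x)"
  shows "0 \<le> trace ((N::real^'n^'n) ** lyap T Q ** transpose N)"
  unfolding phi_lyap[OF assms(1)]
proof (rule suminf_nonneg[OF summable_phi[OF assms(1)]])
  fix k
  show "0 \<le> trace (N ** Fterm T Q k ** transpose N)"
    using trace_psd[of Q "N ** mpow T k", OF assms(2)]
    by (simp add: Fterm_def matrix_mul_assoc matrix_transpose_mul)
qed

theorem lemma4:
  fixes A Q Pbar :: "real^'n^'n" and C :: "real^'n^'m" and R :: "real^'m^'m"
    and ge mu_star mu :: real
  assumes "spectral_radius A < 1"
    and "pos_def Q" and "pos_def R"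
    and "observable A C" and "controllable A (msqrt Q)"
    and "pos_def Pbar" and "riccati_sol A C Q R Pbar" and "stabilizing A C Q R Pbar"
    and "0 < ge" and "ge < 1"
    and "0 < mu_star" and "mu_star < mu" and "mu < 1"
  shows "Je A Q Pbar ge mu_star < Je A Q Pbar ge mu"
proof -
  have dA: "decays A" by (rule decays_of_sr[OF assms(1)])
  define T where "T = sqrt ge *\<^sub>R A"
  have dT: "decays T" unfolding T_def
    using assms(9,10) by (intro decays_scaleR[OF dA]) (auto simp: real_sqrt_le_1_iff)
  define P where "P = lyap A Q"
  have psdQ: "0 \<le> x \<bullet> (Q *v x)" for x
    using assms(2) unfolding pos_def_def by (cases "x = 0") (auto intro: less_imp_le)
  have hP: "0 \<le> trace (N ** P ** transpose N)" for N :: "real^'n^'n"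
    unfolding P_def by (rule phi_lyap_nonneg[OF dA psdQ])
  have trQ: "0 < trace Q" by (rule trace_pd[OF assms(2)])
  have trP: "trace Q \<le> trace P"
    unfolding P_def by (rule trace_lyap_ge[OF dA trace_psd[OF psdQ]])
  have trTP: "trace P \<le> trace (lyap T P)"
    by (rule trace_lyap_ge[OF dT hP])
  have He: "lyap T (P + Pbar) = lyap T P + lyap T Pbar"
    by (rule lyap_add[OF dT])
  have diff: "Je A Q Pbar ge mu - Je A Q Pbar ge mu_star
      = (1 - ge) * (mu - mu_star) * trace (lyap T P)"
    unfolding Je_def Let_def T_def[symmetric] P_def[symmetric] He trace_add
    by (simp add: algebra_simps)
  have "0 < (1 - ge) * (mu - mu_star) * trace (lyap T P)"
    using assms(10,12) trQ trP trTP by (intro mult_pos_pos) auto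
  with diff show ?thesis by simp
qed

end
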